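(* Let $\sigma_1,\sigma_2>0$ and let $\gamma:\mathbb{S}^1\times[0,T)\to\mathbb{R}^2$ be a smooth family of closed embedded plane curves evolving under $\partial_t\gamma=(\sigma_1k+\sigma_2)\nu$. Suppose that the winding number of the initial curve is positive. Then $T<\infty$ (i.e. the solution cannot exist on $[0,\infty)$).
   Context: $\nu$ is the inward unit normal (the unit tangent rotated by $\pi/2$), $k$ the curvature, $s$ arclength, and the winding number is $\omega=\frac1{2\pi}\int_\gamma k\,ds$. *)

theory Defs
  imports "HOL-Analysis.Analysis"
begin

text \<open>A family of closed curves is a map gamma u t (u the 2pi-periodic parameter on S^1,
  t the time), with values in the plane identified with the complex numbers.\<close>

text \<open>C-infinity on R x I: continuous, and both partial derivatives exist (the time
  derivative one-sided at boundary points of I) and are again C-infinity.\<close>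
coinductive smooth_family :: "real set \<Rightarrow> (real \<Rightarrow> real \<Rightarrow> complex) \<Rightarrow> bool" for I where
  "\<lbrakk> continuous_on (UNIV \<times> I) (\<lambda>(u,t). f u t);
     \<forall>u. \<forall>t\<in>I. ((\<lambda>v. f v t) has_vector_derivative fu u t) (at u);
     \<forall>u. \<forall>t\<in>I. ((\<lambda>s. f u s) has_vector_derivative ft u t) (at t within I);
     smooth_family I fu; smooth_family I ft \<rbrakk> \<Longrightarrow> smooth_family I f"

definition tangent_vec :: "(real \<Rightarrow> real \<Rightarrow> complex) \<Rightarrow> real \<Rightarrow> real \<Rightarrow> complex" where
  "tangent_vec \<gamma> u t = vector_derivative (\<lambda>v. \<gamma> v t) (at u)"

definition normal_vec :: "(real \<Rightarrow> real \<Rightarrow> complex) \<Rightarrow> real \<Rightarrow> real \<Rightarrow> complex" where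
  "normal_vec \<gamma> u t = \<i> * (tangent_vec \<gamma> u t / complex_of_real (norm (tangent_vec \<gamma> u t)))"

text \<open>Signed curvature k, characterised by dT/ds = k nu.\<close>
definition curvature :: "(real \<Rightarrow> real \<Rightarrow> complex) \<Rightarrow> real \<Rightarrow> real \<Rightarrow> real" where
  "curvature \<gamma> u t =
     Im (cnj (tangent_vec \<gamma> u t) * vector_derivative (\<lambda>v. tangent_vec \<gamma> v t) (at u))
     / norm (tangent_vec \<gamma> u t) ^ 3"

definition winding :: "(real \<Rightarrow> real \<Rightarrow> complex) \<Rightarrow> real \<Rightarrow> real" where
  "winding \<gamma> t = integral {0..2*pi} (\<lambda>u. curvature \<gamma> u t * norm (tangent_vec \<gamma> u t)) / (2*pi)"

definition flow_solution ::
  "real \<Rightarrow> real \<Rightarrow> real set \<Rightarrow> (real \<Rightarrow> real \<Rightarrow> complex) \<Rightarrow> bool" where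
  "flow_solution \<sigma>\<^sub>1 \<sigma>\<^sub>2 I \<gamma> \<longleftrightarrow>
     smooth_family I \<gamma> \<and>
     (\<forall>u. \<forall>t\<in>I. \<gamma> (u + 2*pi) t = \<gamma> u t) \<and>
     (\<forall>t\<in>I. inj_on (\<lambda>u. \<gamma> u t) {0..<2*pi}) \<and>
     (\<forall>u. \<forall>t\<in>I. tangent_vec \<gamma> u t \<noteq> 0) \<and>
     (\<forall>u. \<forall>t\<in>I. ((\<lambda>s. \<gamma> u s) has_vector_derivative
          (complex_of_real (\<sigma>\<^sub>1 * curvature \<gamma> u t + \<sigma>\<^sub>2) * normal_vec \<gamma> u t)) (at t within I))"

end

theory Submission
  imports Defs "HOL-Analysis.Analysis"
begin


lemma slice_u:
  assumes "continuous_on (UNIV \<times> I) (\<lambda>(u,t). f u t)" "t \<in> I"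
  shows "continuous_on S (\<lambda>v. f v t)"
proof -
  have "continuous_on S ((\<lambda>(u,t). f u t) \<circ> (\<lambda>v. (v,t)))"
    by (rule continuous_on_compose[OF _ continuous_on_subset[OF assms(1)]]) (auto intro!: continuous_intros simp: assms(2))
  then show ?thesis by (simp add: o_def)
qed
lemma slice_t:
  assumes "continuous_on (UNIV \<times> I) (\<lambda>(u,t). f u t)"
  shows "continuous_on I (\<lambda>t. f u t)"
proof -
  have "continuous_on I ((\<lambda>(u,t). f u t) \<circ> (\<lambda>t. (u,t)))"
    by (rule continuous_on_compose[OF _ continuous_on_subset[OF assms(1)]]) (auto intro!: continuous_intros)
  then show ?thesis by (simp add: o_def)
qed
lemma swap_cont:
  assumes "continuous_on (UNIV \<times> I) (\<lambda>(u,t). f u t)"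
  shows "continuous_on (I \<times> S) (\<lambda>(x,t). f t x)"
proof -
  have "continuous_on (I \<times> S) ((\<lambda>(u,t). f u t) \<circ> (\<lambda>(x,t). (t,x)))"
    by (rule continuous_on_compose[OF _ continuous_on_subset[OF assms(1)]]) (auto intro!: continuous_intros simp: split_beta)
  then show ?thesis by (simp add: o_def split_beta)
qed
lemma mixed_partials:
  fixes g g1 g2 g12 g21 :: "real \<Rightarrow> real \<Rightarrow> complex"
  assumes I: "convex I" "\<And>t. t \<in> I \<Longrightarrow> at t within I \<noteq> bot"
  and c1: "continuous_on (UNIV \<times> I) (\<lambda>(u,t). g1 u t)"
  and c12: "continuous_on (UNIV \<times> I) (\<lambda>(u,t). g12 u t)"
  and c21: "continuous_on (UNIV \<times> I) (\<lambda>(u,t). g21 u t)"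
  and d1: "\<forall>u. \<forall>t\<in>I. ((\<lambda>v. g v t) has_vector_derivative g1 u t) (at u)"
  and d2: "\<forall>u. \<forall>t\<in>I. ((\<lambda>s. g u s) has_vector_derivative g2 u t) (at t within I)"
  and d12: "\<forall>u. \<forall>t\<in>I. ((\<lambda>s. g1 u s) has_vector_derivative g12 u t) (at t within I)"
  and d21: "\<forall>u. \<forall>t\<in>I. ((\<lambda>v. g2 v t) has_vector_derivative g21 u t) (at u)"
  and t0: "t0 \<in> I"
  shows "g12 u0 t0 = g21 u0 t0"
proof -
  define a where "a = u0 - 1"
  have cu: "continuous_on {a..u} (\<lambda>v. g1 v t)" if "t \<in> I" for u t
    by (rule slice_u[OF c1 that])
  have ftc: "g u t - g a t = integral {a..u} (\<lambda>v. g1 v t)" if "t \<in> I" "a \<le> u" for u t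
  proof -
    have "((\<lambda>v. g1 v t) has_integral (g u t - g a t)) {a..u}"
      by (rule fundamental_theorem_of_calculus[OF that(2)])
         (use d1 that in \<open>auto intro: has_vector_derivative_at_within\<close>)
    then show ?thesis by (simp add: integral_unique)
  qed
  have key: "g2 u t0 - g2 a t0 = integral {a..u} (\<lambda>v. g12 v t0)" if "a \<le> u" for u
  proof -
    have L: "((\<lambda>s. integral (cbox a u) (\<lambda>v. g1 v s)) has_vector_derivative
        integral (cbox a u) (\<lambda>v. g12 v t0)) (at t0 within I)"
    proof (rule leibniz_rule_vector_derivative[where f="\<lambda>s v. g1 v s" and fx="\<lambda>s v. g12 v s"])
      show "\<And>x t. x \<in> I \<Longrightarrow> t \<in> cbox a u \<Longrightarrow>
        ((\<lambda>x. g1 t x) has_vector_derivative g12 t x) (at x within I)" using d12 by auto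
      show "\<And>x. x \<in> I \<Longrightarrow> (\<lambda>v. g1 v x) integrable_on cbox a u"
        using cu by (auto intro: integrable_continuous_interval)
      show "continuous_on (I \<times> cbox a u) (\<lambda>(x, t). g12 t x)"
        by (rule swap_cont[OF c12])
    qed (use t0 I in auto)
    have "((\<lambda>s. integral (cbox a u) (\<lambda>v. g1 v s)) has_vector_derivative
        g2 u t0 - g2 a t0) (at t0 within I)"
      apply (rule has_vector_derivative_transform[where f="\<lambda>s. g u s - g a s"])
      using t0 ftc that d2 by (auto intro!: derivative_intros)
    from vector_derivative_unique_within[OF I(2)[OF t0] this L] show ?thesis by simp
  qed
  have A: "((\<lambda>u. integral {a..u} (\<lambda>v. g12 v t0)) has_vector_derivative g12 u0 t0) (at u0 within {a..u0+1})"
    by (rule integral_has_vector_derivative[OF slice_u[OF c12 t0]]) (simp add: a_def)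
  have B: "((\<lambda>u. integral {a..u} (\<lambda>v. g12 v t0)) has_vector_derivative g21 u0 t0) (at u0 within {a..u0+1})"
  proof (rule has_vector_derivative_transform[where f="\<lambda>u. g2 u t0 - g2 a t0"])
    show "u0 \<in> {a..u0+1}" by (simp add: a_def)
    show "\<And>x. x \<in> {a..u0 + 1} \<Longrightarrow> integral {a..x} (\<lambda>v. g12 v t0) = g2 x t0 - g2 a t0"
      using key by simp
    have "((\<lambda>u. g2 u t0) has_vector_derivative g21 u0 t0) (at u0)" using d21 t0 by blast
    then have "((\<lambda>u. g2 u t0 - g2 a t0) has_vector_derivative g21 u0 t0 - 0) (at u0 within {a..u0+1})"
      by (intro has_vector_derivative_diff has_vector_derivative_const) (rule has_vector_derivative_at_within)
    then show "((\<lambda>u. g2 u t0 - g2 a t0) has_vector_derivative g21 u0 t0) (at u0 within {a..u0+1})" by simp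
  qed
  show ?thesis
    by (rule vector_derivative_unique_within[OF _ A B]) (simp add: a_def at_within_Icc_at)
qed

lemma Im_div_cnj: "Im (b / a) = Im (cnj a * b) / (cmod a)^2"
  by (simp add: Im_divide' algebra_simps)

lemma winding_int:
  fixes f f' :: "real \<Rightarrow> complex"
  assumes d: "\<And>u. (f has_vector_derivative f' u) (at u)"
    and c: "continuous_on UNIV f'" and nz: "\<And>u. f u \<noteq> 0" and per: "f (2*pi) = f 0"
  shows "integral {0..2*pi} (\<lambda>u. Im (cnj (f u) * f' u) / (cmod (f u))^2) / (2*pi) \<in> \<int>"
proof -
  define a where "a u = f' u / f u" for u
  have cf: "continuous_on UNIV f"
    by (metis continuous_at_imp_continuous_on d has_vector_derivative_continuous)
  have ca: "continuous_on S a" for S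
    unfolding a_def by (intro continuous_intros continuous_on_subset[OF c] continuous_on_subset[OF cf]) (auto simp: nz)
  define A where "A x = integral {0..x} a" for x
  define h where "h x = f x * exp (- A x)" for x
  have dA: "(A has_vector_derivative a x) (at x within {0..2*pi})" if "x \<in> {0..2*pi}" for x
    unfolding A_def by (rule integral_has_vector_derivative[OF ca that])
  have dh: "(h has_vector_derivative 0) (at x within {0..2*pi})" if "x \<in> {0..2*pi}" for x
  proof -
    have e: "((\<lambda>x. exp (- A x)) has_vector_derivative (- a x) * exp (- A x)) (at x within {0..2*pi})"
      using field_vector_diff_chain_within[OF has_vector_derivative_minus[OF dA[OF that]] DERIV_exp[THEN has_field_derivative_at_within]]
      by (simp add: o_def)
    have "(h has_vector_derivative f x * ((- a x) * exp (- A x)) + f' x * exp (- A x)) (at x within {0..2*pi})"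
      unfolding h_def by (rule has_vector_derivative_mult[OF has_vector_derivative_at_within[OF d] e])
    moreover have "f x * ((- a x) * exp (- A x)) + f' x * exp (- A x) = 0"
      using nz[of x] by (simp add: a_def field_simps)
    ultimately show ?thesis by simp
  qed
  have "((\<lambda>x. 0) has_integral (h (2*pi) - h 0)) {0..2*pi}"
    by (rule fundamental_theorem_of_calculus) (use dh in auto)
  then have "h (2*pi) = h 0" by simp
  then have "exp (- A (2*pi)) = 1" using per nz[of 0] by (simp add: h_def A_def)
  then obtain n :: int where n: "Im (- A (2*pi)) = of_int (2*n) * pi" by (auto simp: exp_eq_1)
  have "((\<lambda>u. Im (a u)) has_integral Im (A (2*pi))) {0..2*pi}"
    unfolding A_def by (rule has_integral_Im[OF integrable_integral[OF integrable_continuous_interval[OF ca]]])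
  then have "integral {0..2*pi} (\<lambda>u. Im (cnj (f u) * f' u) / (cmod (f u))^2) = Im (A (2*pi))"
    by (simp add: a_def Im_div_cnj integral_unique)
  also have "\<dots> = of_int (-2*n) * pi" using n by simp
  finally show ?thesis by simp
qed

lemma norm_vd:
  fixes f :: "real \<Rightarrow> complex"
  assumes "(f has_vector_derivative f') (at x within S)" "f x \<noteq> 0"
  shows "((\<lambda>y. norm (f y)) has_real_derivative (Re (cnj (f x) * f') / norm (f x))) (at x within S)"
proof -
  have n: "(norm has_derivative (\<lambda>h. inner h (sgn (f x)))) (at (f x))"
    using has_derivative_norm[OF assms(2)] by simp
  have "((\<lambda>y. norm (f y)) has_derivative (\<lambda>h. inner (h *\<^sub>R f') (sgn (f x)))) (at x within S)"
    using diff_chain_within[OF assms(1)[unfolded has_vector_derivative_def] n[THEN has_derivative_at_withinI]]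
    by (simp add: o_def)
  moreover have "(\<lambda>h. inner (h *\<^sub>R f') (sgn (f x))) = (*) (Re (cnj (f x) * f') / norm (f x))"
    by (rule ext) (simp add: inner_complex_def sgn_div_norm algebra_simps add_divide_distrib divide_inverse)
  ultimately show ?thesis
    by (simp add: has_field_derivative_def)
qed

lemma tau_deriv:
  fixes f :: "real \<Rightarrow> complex"
  assumes "(f has_vector_derivative w) (at x within S)" "f x \<noteq> 0"
  shows "((\<lambda>y. inverse (cmod (f y)) *\<^sub>R f y) has_vector_derivative
     (inverse (cmod (f x)) *\<^sub>R w + (- (inverse (cmod (f x)) * (Re (cnj (f x) * w) / cmod (f x)) * inverse (cmod (f x)))) *\<^sub>R f x))
     (at x within S)"
  by (rule has_vector_derivative_scaleR[OF DERIV_inverse'[OF norm_vd[OF assms]] assms(1)]) (use assms in simp)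

lemma alg:
  fixes z w :: complex and V :: real
  assumes "z \<noteq> 0"
  shows "Re (cnj (inverse (cmod z) *\<^sub>R w + (- (inverse (cmod z) * (Re (cnj z * w) / cmod z) * inverse (cmod z))) *\<^sub>R z)
     * (complex_of_real V * (\<i> * (z / complex_of_real (cmod z)))))
   = V * (Im (cnj z * w) / cmod z ^ 3) * cmod z"
proof -
  have n: "cmod z > 0" using assms by simp
  have n2: "(cmod z)^2 = (Re z)^2 + (Im z)^2" by (simp add: cmod_power2)
  have "Re (cnj (inverse (cmod z) *\<^sub>R w + (- (inverse (cmod z) * (Re (cnj z * w) / cmod z) * inverse (cmod z))) *\<^sub>R z)
     * (complex_of_real V * (\<i> * (z / complex_of_real (cmod z)))))
     = V * (Re z * Im w - Im z * Re w) / (cmod z)^2"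
    using n by (simp add: field_simps power2_eq_square scaleR_conv_of_real)
  also have "\<dots> = V * (Im (cnj z * w) / cmod z ^ 3) * cmod z"
    using n by (simp add: field_simps power2_eq_square power3_eq_cube)
  finally show ?thesis .
qed

lemma decay_contra:
  fixes L L' :: "real \<Rightarrow> real"
  assumes d: "\<And>t. t \<ge> 0 \<Longrightarrow> (L has_real_derivative L' t) (at t within {0..})"
    and b: "\<And>t. t \<ge> 0 \<Longrightarrow> L' t \<le> - c" and c: "c > 0" and p: "\<And>t. t \<ge> 0 \<Longrightarrow> L t \<ge> 0"
  shows False
proof -
  define t where "t = L 0 / c + 1"
  have t0: "t \<ge> 0" using p[of 0] c by (simp add: t_def)
  have "\<exists>x\<in>{0..t}. L t - L 0 = (\<lambda>h. h * L' x) (t - 0)"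
  proof (rule mvt_very_simple[OF t0])
    fix x assume "0 \<le> x" "x \<le> t"
    then show "(L has_derivative (\<lambda>h. h * L' x)) (at x within {0..t})"
    proof -
      have e: "(\<lambda>h. h * L' x) = (*) (L' x)" by (auto simp: mult.commute)
      show ?thesis
        using d[of x] has_field_derivative_subset[of L "L' x" x "{0..}" "{0..t}"] \<open>0 \<le> x\<close>
        unfolding e by (auto simp: has_field_derivative_def)
    qed
  qed
  then obtain x where x: "x \<in> {0..t}" "L t - L 0 = t * L' x" by auto
  have "t * L' x \<le> t * (-c)" using b[of x] x t0 by (intro mult_left_mono) auto
  then have "L t \<le> L 0 - t * c" using x by simp
  also have "\<dots> = - c" using c by (simp add: t_def field_simps)
  finally show False using p[OF t0] c by simp
qed

lemma sfD:
  assumes "smooth_family I f"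
  obtains fu ft where "continuous_on (UNIV \<times> I) (\<lambda>(u,t). f u t)"
     "\<forall>u. \<forall>t\<in>I. ((\<lambda>v. f v t) has_vector_derivative fu u t) (at u)"
     "\<forall>u. \<forall>t\<in>I. ((\<lambda>s. f u s) has_vector_derivative ft u t) (at t within I)"
     "smooth_family I fu" "smooth_family I ft"
  using assms by (cases rule: smooth_family.cases) blast

lemma per_deriv:
  fixes f f' :: "real \<Rightarrow> complex"
  assumes p: "\<And>v. f (v + 2*pi) = f v" and d: "\<And>v. (f has_vector_derivative f' v) (at v)"
  shows "f' (u + 2*pi) = f' u"
proof -
  have s: "((\<lambda>v. v + 2*pi) has_vector_derivative 1) (at u)"
    by (auto intro!: derivative_eq_intros)
  have "((f \<circ> (\<lambda>v. v + 2*pi)) has_vector_derivative (1 *\<^sub>R f' (u + 2*pi))) (at u)"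
    by (rule vector_diff_chain_at[OF s d])
  moreover have "f \<circ> (\<lambda>v. v + 2*pi) = f" using p by (auto simp: o_def)
  ultimately have "(f has_vector_derivative f' (u + 2*pi)) (at u)" by simp
  from vector_derivative_unique_at[OF this d] show ?thesis .
qed

lemma nb0: "t \<ge> (0::real) \<Longrightarrow> at t within {0..} \<noteq> bot"
proof -
  assume t: "t \<ge> 0"
  have "at t within {t..t+1} \<noteq> bot" by (simp add: at_within_Icc_at_right)
  moreover have "{t..t+1} \<subseteq> {0..}" using t by auto
  ultimately show ?thesis
    by (metis at_le bot.extremum_uniqueI)
qed
lemma ints_sep: "(a::real) \<in> \<int> \<Longrightarrow> b \<in> \<int> \<Longrightarrow> a \<noteq> b \<Longrightarrow> 1 \<le> norm (a - b)"
  by (auto elim!: Ints_cases)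

lemma re_tau: "Re (cnj (inverse (cmod z) *\<^sub>R z) * w) = Re (cnj z * w) / cmod z"
proof -
  have "cnj (inverse (cmod z) *\<^sub>R z) * w = inverse (cmod z) *\<^sub>R (cnj z * w)"
    by (simp add: complex_cnj_scaleR)
  then show ?thesis by (simp add: divide_inverse mult.commute)
qed


theorem lemma2p6:
  fixes \<sigma>\<^sub>1 \<sigma>\<^sub>2 :: real and T :: ereal and \<gamma> :: "real \<Rightarrow> real \<Rightarrow> complex"
  assumes "\<sigma>\<^sub>1 > 0" and "\<sigma>\<^sub>2 > 0" and "T > 0"
    and "flow_solution \<sigma>\<^sub>1 \<sigma>\<^sub>2 {t. 0 \<le> t \<and> ereal t < T} \<gamma>"
    and "winding \<gamma> 0 > 0"
  shows "T < \<infinity>"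
proof (rule ccontr)
  assume "\<not> T < \<infinity>"
  then have T: "T = \<infinity>" by (cases T) auto
  define I where "I = {0::real..}"
  have I0: "0 \<in> I" by (simp add: I_def)
  have IT: "{t. 0 \<le> t \<and> ereal t < T} = I" using T by (auto simp: I_def)
  have fs: "flow_solution \<sigma>\<^sub>1 \<sigma>\<^sub>2 I \<gamma>" using assms(4) IT by simp
  then have sm: "smooth_family I \<gamma>" and per: "\<forall>u. \<forall>t\<in>I. \<gamma> (u + 2*pi) t = \<gamma> u t"
    and nz: "\<forall>u. \<forall>t\<in>I. tangent_vec \<gamma> u t \<noteq> 0"
    and fl: "\<forall>u. \<forall>t\<in>I. ((\<lambda>s. \<gamma> u s) has_vector_derivative
          (complex_of_real (\<sigma>\<^sub>1 * curvature \<gamma> u t + \<sigma>\<^sub>2) * normal_vec \<gamma> u t)) (at t within I)"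
    unfolding flow_solution_def by blast+
  obtain g1 g2 where d1: "\<forall>u. \<forall>t\<in>I. ((\<lambda>v. \<gamma> v t) has_vector_derivative g1 u t) (at u)"
     and d2: "\<forall>u. \<forall>t\<in>I. ((\<lambda>s. \<gamma> u s) has_vector_derivative g2 u t) (at t within I)"
     and s1: "smooth_family I g1" and s2: "smooth_family I g2"
    using sfD[OF sm] by metis
  obtain g11 g12 where cg1: "continuous_on (UNIV \<times> I) (\<lambda>(u,t). g1 u t)"
     and d11: "\<forall>u. \<forall>t\<in>I. ((\<lambda>v. g1 v t) has_vector_derivative g11 u t) (at u)"
     and d12: "\<forall>u. \<forall>t\<in>I. ((\<lambda>s. g1 u s) has_vector_derivative g12 u t) (at t within I)"
     and s11: "smooth_family I g11" and s12: "smooth_family I g12"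
    using sfD[OF s1] by metis
  obtain g21 g22 where cg2: "continuous_on (UNIV \<times> I) (\<lambda>(u,t). g2 u t)"
     and d21: "\<forall>u. \<forall>t\<in>I. ((\<lambda>v. g2 v t) has_vector_derivative g21 u t) (at u)"
     and s21: "smooth_family I g21"
    using sfD[OF s2] by metis
  have cg11: "continuous_on (UNIV \<times> I) (\<lambda>(u,t). g11 u t)" using sfD[OF s11] by metis
  have cg12: "continuous_on (UNIV \<times> I) (\<lambda>(u,t). g12 u t)" using sfD[OF s12] by metis
  have cg21: "continuous_on (UNIV \<times> I) (\<lambda>(u,t). g21 u t)" using sfD[OF s21] by metis
  have nb: "\<And>t. t \<in> I \<Longrightarrow> at t within I \<noteq> bot" by (simp add: I_def nb0)
  have tv: "\<And>u t. t \<in> I \<Longrightarrow> tangent_vec \<gamma> u t = g1 u t"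
    unfolding tangent_vec_def using d1 vector_derivative_at by blast
  have g1nz: "\<And>u t. t \<in> I \<Longrightarrow> g1 u t \<noteq> 0" using nz tv by metis
  have tv2: "\<And>u t. t \<in> I \<Longrightarrow> vector_derivative (\<lambda>v. tangent_vec \<gamma> v t) (at u) = g11 u t"
  proof -
    fix u t assume t: "t \<in> I"
    then have "(\<lambda>v. tangent_vec \<gamma> v t) = (\<lambda>v. g1 v t)" using tv by auto
    then show "vector_derivative (\<lambda>v. tangent_vec \<gamma> v t) (at u) = g11 u t"
      using d11 t by (simp add: vector_derivative_at)
  qed
  define \<kappa> where "\<kappa> u t = Im (cnj (g1 u t) * g11 u t) / cmod (g1 u t) ^ 3" for u t
  have curv: "\<And>u t. t \<in> I \<Longrightarrow> curvature \<gamma> u t = \<kappa> u t"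
  proof -
    fix u t assume t: "t \<in> I"
    show "curvature \<gamma> u t = \<kappa> u t"
      unfolding curvature_def tv2[OF t] unfolding tv[OF t] \<kappa>_def ..
  qed
  have g2e: "\<And>u t. t \<in> I \<Longrightarrow> g2 u t =
      complex_of_real (\<sigma>\<^sub>1 * \<kappa> u t + \<sigma>\<^sub>2) * (\<i> * (g1 u t / complex_of_real (cmod (g1 u t))))"
  proof -
    fix u t assume t: "t \<in> I"
    from vector_derivative_unique_within[OF nb[OF t] d2[rule_format, OF t] fl[rule_format, OF t]]
    show "?thesis u t" using t by (simp add: curv normal_vec_def tv)
  qed
  have p1: "\<And>u t. t \<in> I \<Longrightarrow> g1 (u + 2*pi) t = g1 u t"
    by (rule per_deriv[of "\<lambda>v. \<gamma> v t" for t]) (use per d1 in auto)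
  have p11: "\<And>u t. t \<in> I \<Longrightarrow> g11 (u + 2*pi) t = g11 u t"
    by (rule per_deriv[of "\<lambda>v. g1 v t" for t]) (use p1 d11 in auto)
  have p2: "\<And>u t. t \<in> I \<Longrightarrow> g2 (u + 2*pi) t = g2 u t"
    by (simp add: g2e p1 p11 \<kappa>_def)
  have mx: "\<And>u t. t \<in> I \<Longrightarrow> g12 u t = g21 u t"
    by (rule mixed_partials[OF _ nb cg1 cg12 cg21 d1 d2 d12 d21]) (auto simp: I_def)
  define W where "W u t = Im (cnj (g1 u t) * g11 u t) / (cmod (g1 u t))^2" for u t
  have kW: "\<And>u t. t \<in> I \<Longrightarrow> \<kappa> u t * cmod (g1 u t) = W u t"
    using g1nz by (simp add: \<kappa>_def W_def power3_eq_cube power2_eq_square)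
  have wind: "\<And>t. t \<in> I \<Longrightarrow> winding \<gamma> t = integral {0..2*pi} (\<lambda>u. W u t) / (2*pi)"
  proof -
    fix t assume t: "t \<in> I"
    have "\<And>u. curvature \<gamma> u t * norm (tangent_vec \<gamma> u t) = W u t"
      using curv[OF t] tv[OF t] kW[OF t] by simp
    then show "winding \<gamma> t = integral {0..2*pi} (\<lambda>u. W u t) / (2*pi)"
      by (simp add: winding_def)
  qed
  have wZ: "\<And>t. t \<in> I \<Longrightarrow> winding \<gamma> t \<in> \<int>"
  proof -
    fix t assume t: "t \<in> I"
    have "integral {0..2*pi} (\<lambda>u. Im (cnj (g1 u t) * g11 u t) / (cmod (g1 u t))^2) / (2*pi) \<in> \<int>"
    proof (rule winding_int)
      show "\<And>u. ((\<lambda>u. g1 u t) has_vector_derivative g11 u t) (at u)" using d11 t by blast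
      show "continuous_on UNIV (\<lambda>u. g11 u t)" by (rule slice_u[OF cg11 t])
      show "\<And>u. g1 u t \<noteq> 0" using g1nz t by blast
      show "g1 (2 * pi) t = g1 0 t" using p1[of t 0] t by simp
    qed
    then show "winding \<gamma> t \<in> \<int>" by (simp add: wind t W_def)
  qed
  have cg1': "continuous_on (UNIV \<times> I) (\<lambda>x. g1 (fst x) (snd x))" using cg1 by (simp add: split_beta)
  have cg11': "continuous_on (UNIV \<times> I) (\<lambda>x. g11 (fst x) (snd x))" using cg11 by (simp add: split_beta)
  have cg12': "continuous_on (UNIV \<times> I) (\<lambda>x. g12 (fst x) (snd x))" using cg12 by (simp add: split_beta)
  have g1nz': "\<And>x. x \<in> UNIV \<times> I \<Longrightarrow> g1 (fst x) (snd x) \<noteq> 0" using g1nz by auto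
  have cW: "continuous_on (UNIV \<times> I) (\<lambda>(u,t). W u t)"
  proof -
    have "continuous_on (UNIV \<times> I) (\<lambda>x. Im (cnj (g1 (fst x) (snd x)) * g11 (fst x) (snd x)) / (cmod (g1 (fst x) (snd x)))^2)"
      by (rule continuous_on_divide[OF continuous_on_Im[OF continuous_on_mult[OF continuous_on_cnj[OF cg1'] cg11']] continuous_on_power[OF continuous_on_norm[OF cg1']]]) (use g1nz' in auto)
    then show ?thesis by (simp add: split_beta W_def)
  qed
  have c\<kappa>: "continuous_on (UNIV \<times> I) (\<lambda>(u,t). \<kappa> u t)"
  proof -
    have "continuous_on (UNIV \<times> I) (\<lambda>x. Im (cnj (g1 (fst x) (snd x)) * g11 (fst x) (snd x)) / (cmod (g1 (fst x) (snd x)))^3)"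
      by (rule continuous_on_divide[OF continuous_on_Im[OF continuous_on_mult[OF continuous_on_cnj[OF cg1'] cg11']] continuous_on_power[OF continuous_on_norm[OF cg1']]]) (use g1nz' in auto)
    then show ?thesis by (simp add: split_beta \<kappa>_def)
  qed
  define D where "D u t = Re (cnj (g1 u t) * g12 u t) / cmod (g1 u t)" for u t
  have cD: "continuous_on (UNIV \<times> I) (\<lambda>(u,t). D u t)"
  proof -
    have "continuous_on (UNIV \<times> I) (\<lambda>x. Re (cnj (g1 (fst x) (snd x)) * g12 (fst x) (snd x)) / cmod (g1 (fst x) (snd x)))"
      by (rule continuous_on_divide[OF continuous_on_Re[OF continuous_on_mult[OF continuous_on_cnj[OF cg1'] cg12']] continuous_on_norm[OF cg1']]) (use g1nz' in auto)
    then show ?thesis by (simp add: split_beta D_def)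
  qed
  have wc: "continuous_on I (winding \<gamma>)"
  proof -
    have "continuous_on I (\<lambda>t. integral (cbox 0 (2*pi)) (\<lambda>u. W u t))"
      by (rule integral_continuous_on_param[OF swap_cont[OF cW]])
    then have "continuous_on I (\<lambda>t. integral {0..2*pi} (\<lambda>u. W u t) / (2*pi))"
      by (intro continuous_intros) auto
    then show ?thesis by (rule continuous_on_eq) (simp add: wind)
  qed
  have wconst: "\<And>t. t \<in> I \<Longrightarrow> winding \<gamma> t = winding \<gamma> 0"
  proof -
    have "winding \<gamma> constant_on I"
    proof (rule continuous_discrete_range_constant[OF _ wc])
      show "connected I" by (simp add: I_def)
      fix x assume x: "x \<in> I"
      show "\<exists>e>0. \<forall>y. y \<in> I \<and> winding \<gamma> y \<noteq> winding \<gamma> x \<longrightarrow> e \<le> norm (winding \<gamma> y - winding \<gamma> x)"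
      proof (intro exI[of _ 1] conjI allI impI)
        fix y assume "y \<in> I \<and> winding \<gamma> y \<noteq> winding \<gamma> x"
        then have y: "y \<in> I" and ne: "winding \<gamma> y \<noteq> winding \<gamma> x" by auto
        show "1 \<le> norm (winding \<gamma> y - winding \<gamma> x)" by (rule ints_sep[OF wZ[OF y] wZ[OF x] ne])
      qed simp
    qed
    then show "\<And>t. t \<in> I \<Longrightarrow> winding \<gamma> t = winding \<gamma> 0"
      using I0 by (auto simp: constant_on_def)
  qed
  define L where "L = (\<lambda>t. integral {0..2*pi} (\<lambda>u. cmod (g1 u t)))"
  define L' where "L' = (\<lambda>t. integral {0..2*pi} (\<lambda>u. D u t))"
  have Ld: "\<And>t. t \<in> I \<Longrightarrow> (L has_real_derivative L' t) (at t within I)"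
  proof -
    fix t assume t: "t \<in> I"
    have "((\<lambda>s. integral (cbox 0 (2*pi)) (\<lambda>u. cmod (g1 u s))) has_vector_derivative
        integral (cbox 0 (2*pi)) (\<lambda>u. D u t)) (at t within I)"
    proof (rule leibniz_rule_vector_derivative[where f="\<lambda>s u. cmod (g1 u s)" and fx="\<lambda>s u. D u s"])
      fix x u assume x: "x \<in> I" and "u \<in> cbox 0 (2*pi)"
      have "((\<lambda>s. g1 u s) has_vector_derivative g12 u x) (at x within I)" using d12 x by blast
      from norm_vd[OF this g1nz[OF x]]
      show "((\<lambda>x. cmod (g1 u x)) has_vector_derivative D u x) (at x within I)"
        unfolding D_def by (simp add: has_real_derivative_iff_has_vector_derivative)
    next
      fix x assume x: "x \<in> I"
      show "(\<lambda>u. cmod (g1 u x)) integrable_on cbox 0 (2*pi)"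
        by (rule integrable_continuous[OF continuous_on_norm[OF slice_u[OF cg1 x]]])
    next
      show "continuous_on (I \<times> cbox 0 (2*pi)) (\<lambda>(x,u). D u x)" by (rule swap_cont[OF cD])
    qed (use t in \<open>auto simp: I_def\<close>)
    then show "(L has_real_derivative L' t) (at t within I)"
      by (simp add: L_def L'_def has_real_derivative_iff_has_vector_derivative)
  qed
  have Lv: "\<And>t. t \<in> I \<Longrightarrow> L' t \<le> - (2*pi*\<sigma>\<^sub>2*winding \<gamma> 0)"
  proof -
    fix t assume t: "t \<in> I"
    define \<tau> where "\<tau> = (\<lambda>u. inverse (cmod (g1 u t)) *\<^sub>R g1 u t)"
    define \<tau>' where "\<tau>' = (\<lambda>u. inverse (cmod (g1 u t)) *\<^sub>R g11 u t + (- (inverse (cmod (g1 u t)) * (Re (cnj (g1 u t) * g11 u t) / cmod (g1 u t)) * inverse (cmod (g1 u t)))) *\<^sub>R g1 u t)"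
    define E where "E = (\<lambda>u. (\<sigma>\<^sub>1 * \<kappa> u t + \<sigma>\<^sub>2) * \<kappa> u t * cmod (g1 u t))"
    have dh: "((\<lambda>u. cnj (\<tau> u) * g2 u t) has_vector_derivative (cnj (\<tau> u) * g21 u t + cnj (\<tau>' u) * g2 u t)) (at u within {0..2*pi})" for u
    proof -
      have d11': "((\<lambda>v. g1 v t) has_vector_derivative g11 u t) (at u within {0..2*pi})"
        using has_vector_derivative_at_within d11 t by blast
      have a: "(\<tau> has_vector_derivative \<tau>' u) (at u within {0..2*pi})"
        unfolding \<tau>_def \<tau>'_def by (rule tau_deriv[OF d11' g1nz[OF t]])
      have b: "((\<lambda>u. g2 u t) has_vector_derivative g21 u t) (at u within {0..2*pi})"
        using has_vector_derivative_at_within d21 t by blast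
      show ?thesis by (rule has_vector_derivative_mult[OF has_vector_derivative_cnj[OF a] b])
    qed
    have "((\<lambda>u. cnj (\<tau> u) * g21 u t + cnj (\<tau>' u) * g2 u t) has_integral
       (cnj (\<tau> (2*pi)) * g2 (2*pi) t - cnj (\<tau> 0) * g2 0 t)) {0..2*pi}"
      by (rule fundamental_theorem_of_calculus) (use dh in auto)
    moreover have "cnj (\<tau> (2*pi)) * g2 (2*pi) t - cnj (\<tau> 0) * g2 0 t = 0"
      using p1[OF t, of 0] p2[OF t, of 0] by (simp add: \<tau>_def)
    ultimately have hi: "((\<lambda>u. cnj (\<tau> u) * g21 u t + cnj (\<tau>' u) * g2 u t) has_integral 0) {0..2*pi}"
      by simp
    have eq: "Re (cnj (\<tau> u) * g21 u t + cnj (\<tau>' u) * g2 u t) = D u t + E u" for u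
    proof -
      have e1: "Re (cnj (\<tau>' u) * g2 u t) = E u"
        unfolding \<tau>'_def g2e[OF t] E_def \<kappa>_def by (rule alg[OF g1nz[OF t]])
      have e2: "Re (cnj (\<tau> u) * g21 u t) = D u t"
        unfolding \<tau>_def D_def mx[OF t, symmetric] by (rule re_tau)
      show ?thesis using e1 e2 by simp
    qed
    have hi2: "((\<lambda>u. D u t + E u) has_integral 0) {0..2*pi}"
      using has_integral_Re[OF hi] unfolding eq by simp
    have DI: "(\<lambda>u. D u t) integrable_on {0..2*pi}"
      by (rule integrable_continuous_interval[OF slice_u[OF cD t]])
    have WI: "(\<lambda>u. W u t) integrable_on {0..2*pi}"
      by (rule integrable_continuous_interval[OF slice_u[OF cW t]])
    have EI: "E integrable_on {0..2*pi}"
    proof -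
      have "(\<lambda>u. (D u t + E u) - D u t) integrable_on {0..2*pi}"
        by (rule integrable_diff[OF has_integral_integrable[OF hi2] DI])
      then show ?thesis by simp
    qed
    have "integral {0..2*pi} (\<lambda>u. D u t + E u) = 0" using hi2 by (rule integral_unique)
    then have LE: "L' t = - integral {0..2*pi} E"
      using integral_add[OF DI EI] by (simp add: L'_def)
    have "integral {0..2*pi} (\<lambda>u. \<sigma>\<^sub>2 * W u t) \<le> integral {0..2*pi} E"
    proof (rule integral_le)
      show "(\<lambda>u. \<sigma>\<^sub>2 * W u t) integrable_on {0..2*pi}" using integrable_cmul[OF WI, of "\<sigma>\<^sub>2"] by simp
      show "E integrable_on {0..2*pi}" by (rule EI)
      fix u
      have "E u = \<sigma>\<^sub>1 * (\<kappa> u t)^2 * cmod (g1 u t) + \<sigma>\<^sub>2 * (\<kappa> u t * cmod (g1 u t))"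
        by (simp add: E_def algebra_simps power2_eq_square)
      also have "\<dots> = \<sigma>\<^sub>1 * (\<kappa> u t)^2 * cmod (g1 u t) + \<sigma>\<^sub>2 * W u t" by (simp add: kW[OF t])
      finally show "\<sigma>\<^sub>2 * W u t \<le> E u" using assms(1) by simp
    qed
    moreover have "integral {0..2*pi} (\<lambda>u. \<sigma>\<^sub>2 * W u t) = 2*pi*\<sigma>\<^sub>2*winding \<gamma> 0"
    proof -
      have IW: "integral {0..2*pi} (\<lambda>u. W u t) = 2*pi*winding \<gamma> 0"
        using wind[OF t] wconst[OF t] by simp
      show ?thesis using IW by simp
    qed
    ultimately show "L' t \<le> - (2*pi*\<sigma>\<^sub>2*winding \<gamma> 0)" using LE by linarith
  qed
  show False
  proof (rule decay_contra[of L L' "2*pi*\<sigma>\<^sub>2*winding \<gamma> 0"])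
    show "\<And>t. 0 \<le> t \<Longrightarrow> (L has_real_derivative L' t) (at t within {0..})"
      using Ld by (simp add: I_def)
    show "\<And>t. 0 \<le> t \<Longrightarrow> L' t \<le> - (2*pi*\<sigma>\<^sub>2*winding \<gamma> 0)"
      using Lv by (simp add: I_def)
    show "0 < 2*pi*\<sigma>\<^sub>2*winding \<gamma> 0" using assms(2,5) by simp
    show "\<And>t. 0 \<le> t \<Longrightarrow> 0 \<le> L t"
    proof -
      fix t :: real assume "0 \<le> t"
      then have t: "t \<in> I" by (simp add: I_def)
      show "0 \<le> L t" unfolding L_def
        by (rule integral_nonneg[OF integrable_continuous_interval[OF continuous_on_norm[OF slice_u[OF cg1 t]]]]) simp
    qed
  qed
qed
end
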